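(* For the system $$u_{0,0}-v_{1,1}=0,\qquad (u_{1,0}-u_{0,0})(v_{1,0}-u_{0,0})-(u_{0,1}-u_{0,0})(v_{0,1}-u_{0,0})=0,$$ each of the following is a symmetry: $$\frac{\partial u_{0,0}}{\partial t_1}=\frac{u_{0,0}-v_{1,0}}{u_{-1,0}-v_{1,0}},\qquad \frac{\partial v_{0,0}}{\partial t_1}=\frac{u_{-1,0}-v_{0,0}}{u_{-1,0}-v_{1,0}},$$ and $$\frac{\partial u_{0,0}}{\partial s_1}=(u_{1,0}-u_{0,0})(v_{1,0}-u_{0,0}),\qquad \frac{\partial v_{0,0}}{\partial s_1}=(u_{-1,0}-v_{0,0})(v_{-1,0}-v_{0,0}).$$
   Context: Unknowns $u,v$ on $\mathbb Z^2$, $u_{i,j}=u(n+i,m+j)$, similarly $v$. Shifts $\mathcal S:n\mapsto n+1$, $\mathcal T:m\mapsto m+1$. For a quad system $\boldsymbol Q(\boldsymbol u_{0,0},\boldsymbol u_{1,0},\boldsymbol u_{0,1},\boldsymbol u_{1,1})=\boldsymbol 0$ with $\boldsymbol u=(u,v)$ and Jacobians $\mathrm Q_{(p,q)}=\partial\boldsymbol Q/\partial\boldsymbol u_{p,q}$, a vector function $\boldsymbol F(n,m,[\boldsymbol u])=(F^{(1)},F^{(2)})$ is a symmetry, written $\partial_t u_{0,0}=F^{(1)}$, $\partial_t v_{0,0}=F^{(2)}$, if $\mathrm Q_{(0,0)}\boldsymbol F+\mathrm Q_{(1,0)}\mathcal S(\boldsymbol F)+\mathrm Q_{(0,1)}\mathcal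 T(\boldsymbol F)+\mathrm Q_{(1,1)}\mathcal S\mathcal T(\boldsymbol F)=\boldsymbol 0$ holds on all solutions of the system (where $\mathcal S^p\mathcal T^q(\boldsymbol F)$ is $\boldsymbol F$ with all shifts of $\boldsymbol u$ shifted by $(p,q)$). *)

theory Defs
  imports Complex_Main
begin

type_synonym field2 = "int \<Rightarrow> int \<Rightarrow> real"

definition Q1 :: "real \<Rightarrow> real \<Rightarrow> real \<Rightarrow> real \<Rightarrow> real \<Rightarrow> real \<Rightarrow> real \<Rightarrow> real \<Rightarrow> real" where
  "Q1 u00 v00 u10 v10 u01 v01 u11 v11 = u00 - v11"

definition Q2 :: "real \<Rightarrow> real \<Rightarrow> real \<Rightarrow> real \<Rightarrow> real \<Rightarrow> real \<Rightarrow> real \<Rightarrow> real \<Rightarrow> real" where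
  "Q2 u00 v00 u10 v10 u01 v01 u11 v11 =
     (u10 - u00) * (v10 - u00) - (u01 - u00) * (v01 - u00)"

definition at_quad ::
  "(real \<Rightarrow> real \<Rightarrow> real \<Rightarrow> real \<Rightarrow> real \<Rightarrow> real \<Rightarrow> real \<Rightarrow> real \<Rightarrow> real)
   \<Rightarrow> field2 \<Rightarrow> field2 \<Rightarrow> int \<Rightarrow> int \<Rightarrow> real" where
  "at_quad Q u v n m =
     Q (u n m) (v n m) (u (n+1) m) (v (n+1) m)
       (u n (m+1)) (v n (m+1)) (u (n+1) (m+1)) (v (n+1) (m+1))"

definition is_solution :: "field2 \<Rightarrow> field2 \<Rightarrow> bool" where
  "is_solution u v \<longleftrightarrow> (\<forall>n m. at_quad Q1 u v n m = 0 \<and> at_quad Q2 u v n m = 0)"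

text \<open>Linearisation: Q_(0,0) F + Q_(1,0) S(F) + Q_(0,1) T(F) + Q_(1,1) ST(F) at (n,m),
  i.e. the derivative at eps = 0 of Q evaluated on (u + eps F1, v + eps F2),
  where F1 u v n m, F2 u v n m are the values of the flow components at (n,m).\<close>
definition linearised_zero ::
  "(real \<Rightarrow> real \<Rightarrow> real \<Rightarrow> real \<Rightarrow> real \<Rightarrow> real \<Rightarrow> real \<Rightarrow> real \<Rightarrow> real)
   \<Rightarrow> (field2 \<Rightarrow> field2 \<Rightarrow> field2) \<Rightarrow> (field2 \<Rightarrow> field2 \<Rightarrow> field2)
   \<Rightarrow> field2 \<Rightarrow> field2 \<Rightarrow> int \<Rightarrow> int \<Rightarrow> bool" where
  "linearised_zero Q F1 F2 u v n m \<longleftrightarrow>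
     ((\<lambda>eps. at_quad Q (\<lambda>i j. u i j + eps * F1 u v i j) (\<lambda>i j. v i j + eps * F2 u v i j) n m)
        has_real_derivative 0) (at 0)"

definition Ft1 :: "field2 \<Rightarrow> field2 \<Rightarrow> field2" where
  "Ft1 u v n m = (u n m - v (n+1) m) / (u (n-1) m - v (n+1) m)"
definition Gt1 :: "field2 \<Rightarrow> field2 \<Rightarrow> field2" where
  "Gt1 u v n m = (u (n-1) m - v n m) / (u (n-1) m - v (n+1) m)"
definition Fs1 :: "field2 \<Rightarrow> field2 \<Rightarrow> field2" where
  "Fs1 u v n m = (u (n+1) m - u n m) * (v (n+1) m - u n m)"
definition Gs1 :: "field2 \<Rightarrow> field2 \<Rightarrow> field2" where
  "Gs1 u v n m = (u (n-1) m - v n m) * (v (n-1) m - v n m)"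

end

theory Submission
  imports Defs
begin


lemma t1Q1: fixes a b c d e :: real
  assumes "(b-a)*(d-a) - (c-a)*(e-a) = 0" "e\<noteq>d" "c\<noteq>b"
  shows "(a-d)/(e-d) - (c-a)/(c-b) = 0"
  using assms by (simp add: field_simps)

lemma t1Q2: fixes a b c d e p q :: real
  assumes "(b-a)*(d-a) - (c-a)*(e-a) = 0" "e\<noteq>d" "a\<noteq>p" "q\<noteq>a"
  shows "((b-p)/(a-p) - (a-d)/(e-d))*(d-a) + (b-a)*((a-d)/(a-p) - (a-d)/(e-d))
     - ((c-a)/(q-a) - (a-d)/(e-d))*(e-a) - (c-a)*((q-e)/(q-a) - (a-d)/(e-d)) = 0"
proof -
  define x y z where "x = e - d" and "y = a - p" and "z = q - a"
  have xyz: "x \<noteq> 0" "y \<noteq> 0" "z \<noteq> 0" using assms by (auto simp: x_def y_def z_def)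
  have e: "e = d + x" and p: "p = a - y" and q: "q = a + z" by (auto simp: x_def y_def z_def)
  have h: "(b-a)*(d-a) - (c-a)*(d+x-a) = 0" using assms(1) e by simp
  show ?thesis unfolding e p q using xyz h by (simp add: field_simps) algebra
qed

lemma s1Q2: fixes a b c d e s w :: real
  assumes "(b-a)*(d-a) - (c-a)*(e-a) = 0"
  shows "((w-b)*(a-b) - (b-a)*(d-a))*(d-a) + (b-a)*((a-d)*(s-d) - (b-a)*(d-a))
     - ((w-c)*(a-c) - (b-a)*(d-a))*(e-a) - (c-a)*((a-e)*(s-e) - (b-a)*(d-a)) = 0"
  using assms by algebra

lemma linQ1: assumes "F u v n m - G u v (n+1) (m+1) = 0"
  shows "linearised_zero Q1 F G u v n m"
  unfolding linearised_zero_def at_quad_def Q1_def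
  by (auto intro!: derivative_eq_intros simp: assms[symmetric] algebra_simps)

lemma linQ2: assumes "(F u v (n+1) m - F u v n m) * (v (n+1) m - u n m)
   + (u (n+1) m - u n m) * (G u v (n+1) m - F u v n m)
   - (F u v n (m+1) - F u v n m) * (v n (m+1) - u n m)
   - (u n (m+1) - u n m) * (G u v n (m+1) - F u v n m) = 0"
  shows "linearised_zero Q2 F G u v n m"
  unfolding linearised_zero_def at_quad_def Q2_def
  apply (rule derivative_eq_intros refl)+
  using assms by (simp add: algebra_simps)


theorem mainTheorem8:
  fixes u v :: "int \<Rightarrow> int \<Rightarrow> real" and n m :: int
  assumes "is_solution u v"
  shows "((\<forall>p\<in>{0,1}. \<forall>q\<in>{0,1}. u (n+p-1) (m+q) \<noteq> v (n+p+1) (m+q)) \<longrightarrow>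
            linearised_zero Q1 Ft1 Gt1 u v n m \<and> linearised_zero Q2 Ft1 Gt1 u v n m)
       \<and> linearised_zero Q1 Fs1 Gs1 u v n m \<and> linearised_zero Q2 Fs1 Gs1 u v n m"
proof -
  have s: "\<And>i j. at_quad Q1 u v i j = 0 \<and> at_quad Q2 u v i j = 0"
    using assms unfolding is_solution_def by blast
  have hv: "\<And>i j. v i j = u (i-1) (j-1)"
  proof -
    fix i j
    have "at_quad Q1 u v (i-1) (j-1) = 0" using s by blast
    then show "v i j = u (i-1) (j-1)" by (simp add: at_quad_def Q1_def)
  qed
  have hq: "\<And>i j. (u (i+1) j - u i j)*(u i (j-1) - u i j) - (u i (j+1) - u i j)*(u (i-1) j - u i j) = 0"
  proof -
    fix i j
    have "at_quad Q2 u v i j = 0" using s by blast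
    then show "(u (i+1) j - u i j)*(u i (j-1) - u i j) - (u i (j+1) - u i j)*(u (i-1) j - u i j) = 0"
      by (simp add: at_quad_def Q2_def hv)
  qed
  have A: "linearised_zero Q1 Ft1 Gt1 u v n m \<and> linearised_zero Q2 Ft1 Gt1 u v n m"
    if nz: "\<forall>p\<in>{0,1}. \<forall>q\<in>{0,1}. u (n+p-1) (m+q) \<noteq> v (n+p+1) (m+q)"
  proof
    have n1: "u (n-1) m \<noteq> u n (m-1)" using nz hv[of "n+1" m] by auto
    have n2: "u n m \<noteq> u (n+1) (m-1)" using nz hv[of "n+2" m] by (auto simp: add.commute)
    have n3: "u (n-1) (m+1) \<noteq> u n m" using nz hv[of "n+1" "m+1"] by auto
    have n4: "u n (m+1) \<noteq> u (n+1) m" using nz hv[of "n+2" "m+1"] by (auto simp: add.commute)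
    show "linearised_zero Q1 Ft1 Gt1 u v n m"
      apply (rule linQ1)
      using t1Q1[of "u (n+1) m" "u n m" "u n (m-1)" "u n (m+1)" "u (n-1) m"] hq[of n m] n1 n4
      by (simp add: Ft1_def Gt1_def hv add.commute)
    show "linearised_zero Q2 Ft1 Gt1 u v n m"
      apply (rule linQ2)
      using t1Q2[of "u (n+1) m" "u n m" "u n (m-1)" "u n (m+1)" "u (n-1) m" "u (n+1) (m-1)" "u (n-1) (m+1)"] hq[of n m] n1 n2 n3
      by (simp add: Ft1_def Gt1_def hv add.commute)
  qed
  have B: "linearised_zero Q1 Fs1 Gs1 u v n m"
    apply (rule linQ1)
    using hq[of n m] by (simp add: Fs1_def Gs1_def hv add.commute)
  have C: "linearised_zero Q2 Fs1 Gs1 u v n m"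
    apply (rule linQ2)
    using s1Q2[where a="u n m" and b="u (n+1) m" and c="u n (m+1)" and d="u n (m-1)" and e="u (n-1) m" and s="u (n-1) (m-1)" and w="u (n+1) (m+1)"]
      hq[of n m] hq[of "n+1" m] hq[of "n-1" m]
    by (simp add: Fs1_def Gs1_def hv add.commute)
  show ?thesis using A B C by blast
qed

end
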